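(* Let $X$ be a distance-regular graph of diameter $d\geq 2$ with degree $k$, $\lambda=a_1$ and $\mu=c_2$. Then $k-\mu\leq 2(k-\lambda)$. If moreover $a_2\neq 0$, then also $k-\lambda\leq 2(k-\mu)$.
   Context: A connected graph $X$ of diameter $d$ is distance-regular if there are integers $a_i,b_i,c_i$ ($0\le i\le d$) such that for all vertices $v,w$ with $\mathrm{dist}(v,w)=i$, $w$ has exactly $c_i$ neighbours at distance $i-1$, $a_i$ at distance $i$, $b_i$ at distance $i+1$ from $v$; $X$ is $k$-regular with $k=b_0$. Thus $\lambda=a_1$ is the number of common neighbours of two adjacent vertices and $\mu=c_2$ that of two vertices at distance 2. *)

theory Defs
  imports Main
begin

definition simple_graph :: "'v set \<Rightarrow> ('v \<Rightarrow> 'v \<Rightarrow> bool) \<Rightarrow> bool" where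
  "simple_graph V E \<longleftrightarrow> finite V \<and> V \<noteq> {} \<and>
     (\<forall>x\<in>V. \<forall>y\<in>V. E x y \<longleftrightarrow> E y x) \<and> (\<forall>x\<in>V. \<not> E x x)"

definition walk_of_length :: "'v set \<Rightarrow> ('v \<Rightarrow> 'v \<Rightarrow> bool) \<Rightarrow> 'v \<Rightarrow> 'v \<Rightarrow> nat \<Rightarrow> bool" where
  "walk_of_length V E v w n \<longleftrightarrow>
     (\<exists>p::'v list. length p = Suc n \<and> set p \<subseteq> V \<and> hd p = v \<and> last p = w \<and>
        (\<forall>i<n. E (p ! i) (p ! Suc i)))"

definition connected_graph :: "'v set \<Rightarrow> ('v \<Rightarrow> 'v \<Rightarrow> bool) \<Rightarrow> bool" where
  "connected_graph V E \<longleftrightarrow> (\<forall>v\<in>V. \<forall>w\<in>V. \<exists>n. walk_of_length V E v w n)"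

text \<open>Graph distance (meaningful for vertices of a connected graph).\<close>
definition gdist :: "'v set \<Rightarrow> ('v \<Rightarrow> 'v \<Rightarrow> bool) \<Rightarrow> 'v \<Rightarrow> 'v \<Rightarrow> nat" where
  "gdist V E v w = (LEAST n. walk_of_length V E v w n)"

definition diameter :: "'v set \<Rightarrow> ('v \<Rightarrow> 'v \<Rightarrow> bool) \<Rightarrow> nat" where
  "diameter V E = Max {gdist V E v w | v w. v \<in> V \<and> w \<in> V}"

text \<open>Distance-regular graph of diameter d with intersection numbers a_i, b_i, c_i
 (0 \<le> i \<le> d); for i = 0 the count of neighbours at distance i-1 is the empty count, so c_0 = 0.\<close>
definition distance_regular ::
  "'v set \<Rightarrow> ('v \<Rightarrow> 'v \<Rightarrow> bool) \<Rightarrow> nat \<Rightarrow> (nat \<Rightarrow> nat) \<Rightarrow> (nat \<Rightarrow> nat) \<Rightarrow> (nat \<Rightarrow> nat) \<Rightarrow> bool" where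
  "distance_regular V E d a b c \<longleftrightarrow>
     simple_graph V E \<and> connected_graph V E \<and> diameter V E = d \<and>
     (\<forall>i\<le>d. \<forall>v\<in>V. \<forall>w\<in>V. gdist V E v w = i \<longrightarrow>
        card {x\<in>V. E w x \<and> gdist V E v x + 1 = i} = c i \<and>
        card {x\<in>V. E w x \<and> gdist V E v x = i} = a i \<and>
        card {x\<in>V. E w x \<and> gdist V E v x = i + 1} = b i)"

end

theory Submission
  imports Defs
begin

lemma walk0: "walk_of_length V E v w 0 \<longleftrightarrow> v = w \<and> v \<in> V"
  unfolding walk_of_length_def
proof
  assume "\<exists>p. length p = Suc 0 \<and> set p \<subseteq> V \<and> hd p = v \<and> last p = w \<and> (\<forall>i<0. E (p ! i) (p ! Suc i))"
  then obtain p where "length p = Suc 0" "set p \<subseteq> V" "hd p = v" "last p = w" by blast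
  then show "v = w \<and> v \<in> V" by (auto simp: length_Suc_conv)
next
  assume "v = w \<and> v \<in> V"
  then show "\<exists>p. length p = Suc 0 \<and> set p \<subseteq> V \<and> hd p = v \<and> last p = w \<and> (\<forall>i<0. E (p ! i) (p ! Suc i))"
    by (intro exI[of _ "[v]"]) auto
qed

lemma walkSuc: "walk_of_length V E v w (Suc n) \<longleftrightarrow> (\<exists>u. walk_of_length V E v u n \<and> E u w \<and> w \<in> V)"
proof
  assume "walk_of_length V E v w (Suc n)"
  then obtain p where p: "length p = Suc (Suc n)" "set p \<subseteq> V" "hd p = v" "last p = w"
    "\<forall>i<Suc n. E (p ! i) (p ! Suc i)" unfolding walk_of_length_def by blast
  define q where "q = butlast p"
  have lq: "length q = Suc n" using p(1) by (simp add: q_def)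
  have qi: "\<And>i. i < Suc n \<Longrightarrow> q ! i = p ! i" using p(1) by (simp add: q_def nth_butlast)
  have pne: "p \<noteq> []" using p(1) by auto
  have qne: "q \<noteq> []" using lq by auto
  have "hd q = v" using p(3) qi[of 0] qne pne by (simp add: hd_conv_nth)
  moreover have "set q \<subseteq> V" using p(2) by (simp add: q_def) (meson in_set_butlastD subset_iff)
  moreover have "last q = p ! n" using qi[of n] lq qne by (simp add: last_conv_nth)
  moreover have "\<forall>i<n. E (q ! i) (q ! Suc i)" using qi p(5) by auto
  ultimately have "walk_of_length V E v (p ! n) n" unfolding walk_of_length_def using lq by blast
  moreover have "E (p ! n) (p ! Suc n)" using p(5) by simp
  moreover have "p ! Suc n = w" using p(4) p(1) pne by (simp add: last_conv_nth)
  moreover have "w \<in> V" using p(2) p(4) pne by auto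
  ultimately show "\<exists>u. walk_of_length V E v u n \<and> E u w \<and> w \<in> V" by metis
next
  assume "\<exists>u. walk_of_length V E v u n \<and> E u w \<and> w \<in> V"
  then obtain u q where q: "length q = Suc n" "set q \<subseteq> V" "hd q = v" "last q = u"
    "\<forall>i<n. E (q ! i) (q ! Suc i)" and uw: "E u w" "w \<in> V" unfolding walk_of_length_def by blast
  define p where "p = q @ [w]"
  have qne: "q \<noteq> []" using q(1) by auto
  have "length p = Suc (Suc n)" using q(1) by (simp add: p_def)
  moreover have "set p \<subseteq> V" using q(2) uw by (simp add: p_def)
  moreover have "hd p = v" using q(3) qne by (simp add: p_def)
  moreover have "last p = w" by (simp add: p_def)
  moreover have "\<forall>i<Suc n. E (p ! i) (p ! Suc i)"
  proof (intro allI impI)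
    fix i assume i: "i < Suc n"
    show "E (p ! i) (p ! Suc i)"
    proof (cases "i < n")
      case True
      then show ?thesis using q(1) q(5) by (simp add: p_def nth_append)
    next
      case False
      then have "i = n" using i by auto
      then show ?thesis using q(1) q(4) qne uw by (simp add: p_def nth_append last_conv_nth)
    qed
  qed
  ultimately show "walk_of_length V E v w (Suc n)" unfolding walk_of_length_def by blast
qed

lemma walk_in: "walk_of_length V E v w n \<Longrightarrow> v \<in> V \<and> w \<in> V"
proof -
  assume "walk_of_length V E v w n"
  then obtain p where p: "length p = Suc n" "set p \<subseteq> V" "hd p = v" "last p = w"
    unfolding walk_of_length_def by blast
  then have "p \<noteq> []" by auto
  then show ?thesis using p by auto
qed

lemma walk_concat: "walk_of_length V E v u m \<Longrightarrow> walk_of_length V E u w n \<Longrightarrow> walk_of_length V E v w (m + n)"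
proof (induction n arbitrary: w)
  case 0 then show ?case by (simp add: walk0)
next
  case (Suc n)
  from Suc.prems(2) obtain y where y: "walk_of_length V E u y n" "E y w" "w \<in> V"
    unfolding walkSuc by blast
  have "walk_of_length V E v y (m + n)" using Suc.IH[OF Suc.prems(1) y(1)] .
  then have "walk_of_length V E v w (Suc (m + n))" unfolding walkSuc using y by blast
  then show ?case by (simp only: add_Suc_right)
qed

lemma walk_split: "walk_of_length V E v w (m + n) \<Longrightarrow> \<exists>u. walk_of_length V E v u m \<and> walk_of_length V E u w n"
proof (induction n arbitrary: w)
  case 0
  then have h: "walk_of_length V E v w m" by simp
  have "w \<in> V" using walk_in[OF h] by simp
  then have "walk_of_length V E w w 0" by (simp add: walk0)
  then show ?case using h by blast
next
  case (Suc n)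
  from Suc.prems obtain y where y: "walk_of_length V E v y (m + n)" "E y w" "w \<in> V"
    unfolding add_Suc_right walkSuc by blast
  obtain u where u: "walk_of_length V E v u m" "walk_of_length V E u y n" using Suc.IH[OF y(1)] by blast
  have "walk_of_length V E u w (Suc n)" unfolding walkSuc using u(2) y by blast
  then show ?case using u(1) by blast
qed

lemma gdist_walk: "connected_graph V E \<Longrightarrow> v \<in> V \<Longrightarrow> w \<in> V \<Longrightarrow> walk_of_length V E v w (gdist V E v w)"
  unfolding gdist_def connected_graph_def by (meson LeastI_ex)

lemma gdist_le: "walk_of_length V E v w n \<Longrightarrow> gdist V E v w \<le> n"
  unfolding gdist_def by (rule Least_le)

lemma gdist0: "v \<in> V \<Longrightarrow> gdist V E v v = 0"
  using gdist_le[of V E v v 0] walk0 by fastforce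

lemma walk1: "walk_of_length V E v w 1 \<longleftrightarrow> E v w \<and> v \<in> V \<and> w \<in> V"
  unfolding One_nat_def walkSuc walk0 by auto

lemma gdist1: assumes "simple_graph V E" "connected_graph V E" "v \<in> V" "w \<in> V"
  shows "gdist V E v w = 1 \<longleftrightarrow> E v w"
proof
  assume "gdist V E v w = 1"
  then show "E v w" using gdist_walk[OF assms(2-4)] walk1 by metis
next
  assume e: "E v w"
  then have "v \<noteq> w" using assms(1,3) unfolding simple_graph_def by auto
  then have "gdist V E v w \<noteq> 0" using gdist_walk[OF assms(2-4)] walk0 by fastforce
  moreover have "gdist V E v w \<le> 1" using e assms walk1 gdist_le by metis
  ultimately show "gdist V E v w = 1" by auto
qed

theorem lemma4p1:
  fixes V :: "'v set" and E :: "'v \<Rightarrow> 'v \<Rightarrow> bool"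
    and d :: nat and a b c :: "nat \<Rightarrow> nat"
  assumes "distance_regular V E d a b c"
    and "d \<ge> 2"
  shows "int (b 0) - int (c 2) \<le> 2 * (int (b 0) - int (a 1)) \<and>
         (a 2 \<noteq> 0 \<longrightarrow> int (b 0) - int (a 1) \<le> 2 * (int (b 0) - int (c 2)))"
proof -
  have sg: "simple_graph V E" and cg: "connected_graph V E" and dm: "diameter V E = d"
    and reg: "\<And>i v w. i \<le> d \<Longrightarrow> v \<in> V \<Longrightarrow> w \<in> V \<Longrightarrow> gdist V E v w = i \<Longrightarrow>
        card {x\<in>V. E w x \<and> gdist V E v x + 1 = i} = c i \<and>
        card {x\<in>V. E w x \<and> gdist V E v x = i} = a i \<and>
        card {x\<in>V. E w x \<and> gdist V E v x = i + 1} = b i"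
    using assms(1) unfolding distance_regular_def by blast+
  have fin: "finite V" and ne: "V \<noteq> {}" and sym: "\<And>x y. x \<in> V \<Longrightarrow> y \<in> V \<Longrightarrow> E x y \<longleftrightarrow> E y x"
    using sg unfolding simple_graph_def by blast+
  define N where "N v = {x\<in>V. E v x}" for v
  have finN: "finite (N v)" for v using fin by (simp add: N_def)
  have k: "b 0 = card (N v)" if "v \<in> V" for v
  proof -
    have "b 0 = card {x\<in>V. E v x \<and> gdist V E v x = 1}"
      using reg[of 0 v v] that gdist0 by fastforce
    also have "{x\<in>V. E v x \<and> gdist V E v x = 1} = N v"
      using gdist1[OF sg cg that] by (auto simp: N_def)
    finally show ?thesis .
  qed
  have lam: "a 1 = card (N w \<inter> N v)" if "v \<in> V" "w \<in> V" "E v w" for v w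
  proof -
    have "gdist V E v w = 1" using gdist1[OF sg cg that(1,2)] that(3) by simp
    then have "a 1 = card {x\<in>V. E w x \<and> gdist V E v x = 1}"
      using reg[of 1 v w] that assms(2) by fastforce
    also have "{x\<in>V. E w x \<and> gdist V E v x = 1} = N w \<inter> N v"
      using gdist1[OF sg cg that(1)] by (auto simp: N_def)
    finally show ?thesis .
  qed
  have mu: "c 2 = card (N w \<inter> N v)" if "v \<in> V" "w \<in> V" "gdist V E v w = 2" for v w
  proof -
    have "c 2 = card {x\<in>V. E w x \<and> gdist V E v x + 1 = 2}"
      using reg[of 2 v w] that assms(2) by fastforce
    also have "{x\<in>V. E w x \<and> gdist V E v x + 1 = 2} = N w \<inter> N v"
      using gdist1[OF sg cg that(1)] by (auto simp: N_def)
    finally show ?thesis .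
  qed
  have a2: "a 2 = card {x\<in>V. E w x \<and> gdist V E v x = 2}" if "v \<in> V" "w \<in> V" "gdist V E v w = 2" for v w
    using reg[of 2 v w] that assms(2) by fastforce
  obtain u w where uw: "u \<in> V" "w \<in> V" "gdist V E u w = 2"
  proof -
    let ?S = "{gdist V E v w | v w. v \<in> V \<and> w \<in> V}"
    have "?S = (\<lambda>(v,w). gdist V E v w) ` (V \<times> V)" by auto
    then have "finite ?S" "?S \<noteq> {}" using fin ne by auto
    then have "Max ?S \<in> ?S" by (rule Max_in)
    then obtain v z where vz: "v \<in> V" "z \<in> V" "gdist V E v z = d" using dm unfolding diameter_def by auto
    moreover have "2 + (d - 2) = d" using assms(2) by simp
    ultimately have "walk_of_length V E v z (2 + (d - 2))" using gdist_walk[OF cg vz(1,2)] by metis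
    then obtain y where y: "walk_of_length V E v y 2" "walk_of_length V E y z (d - 2)" using walk_split by metis
    have yV: "y \<in> V" using walk_in y(1) by metis
    have "gdist V E v y = 2"
    proof (rule ccontr)
      assume "gdist V E v y \<noteq> 2"
      moreover have "gdist V E v y \<le> 2" using gdist_le y(1) by metis
      ultimately have lt: "gdist V E v y < 2" by auto
      have "walk_of_length V E v z (gdist V E v y + (d - 2))"
        using walk_concat[OF gdist_walk[OF cg vz(1) yV] y(2)] .
      then have "d \<le> gdist V E v y + (d - 2)" using gdist_le vz(3) by metis
      then show False using lt assms(2) by auto
    qed
    then show ?thesis using that vz(1) yV by blast
  qed
  obtain v where v: "walk_of_length V E u v 1" "E v w"
    using gdist_walk[OF cg uw(1,2)] uw(3) walkSuc[of V E u w 1] by (auto simp: numeral_2_eq_2)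
  have uv: "E u v" "v \<in> V" using v(1) walk1 by metis+
  have part1: "2 * a 1 \<le> b 0 + c 2"
  proof -
    let ?A = "N v \<inter> N u" and ?B = "N v \<inter> N w"
    have "card ?A = a 1" using lam[OF uw(1) uv(2) uv(1)] by simp
    moreover have "card ?B = a 1" using lam[OF uv(2) uw(2) v(2)] by (metis Int_commute)
    moreover have "card ?A + card ?B = card (?A \<union> ?B) + card (?A \<inter> ?B)"
      by (intro card_Un_Int) (auto simp: finN)
    moreover have "card (?A \<union> ?B) \<le> card (N v)" by (rule card_mono[OF finN]) auto
    moreover have "card (?A \<inter> ?B) \<le> card (N w \<inter> N u)" by (rule card_mono) (auto simp: finN)
    ultimately show ?thesis using k[OF uv(2)] mu[OF uw] by linarith
  qed
  have part2: "2 * c 2 \<le> b 0 + a 1" if "a 2 \<noteq> 0"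
  proof -
    have "{x\<in>V. E w x \<and> gdist V E u x = 2} \<noteq> {}" using a2[OF uw] that by (metis card.empty)
    then obtain x where x: "x \<in> V" "E w x" "gdist V E u x = 2" by auto
    let ?A = "N w \<inter> N u" and ?B = "N x \<inter> N u"
    have "card ?A = c 2" using mu[OF uw] by simp
    moreover have "card ?B = c 2" using mu[OF uw(1) x(1) x(3)] by simp
    moreover have "card ?A + card ?B = card (?A \<union> ?B) + card (?A \<inter> ?B)"
      by (intro card_Un_Int) (auto simp: finN)
    moreover have "card (?A \<union> ?B) \<le> card (N u)" by (rule card_mono[OF finN]) auto
    moreover have "card (?A \<inter> ?B) \<le> card (N x \<inter> N w)" by (rule card_mono) (auto simp: finN)
    ultimately show ?thesis using k[OF uw(1)] lam[OF uw(2) x(1) x(2)] by linarith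
  qed
  show ?thesis using part1 part2 by auto
qed

end
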